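(* Let $v:M\to\mathbb R\cup\{+\infty\}$ be lower semicontinuous and a BJ solution of $H(x,Dv,v)=0$ in $M$. If $v(z)\in\mathbb R$ for some $z\in M$, then $v$ is real-valued and Lipschitz continuous on $M$.
   Context: $M$ is a connected, closed smooth Riemannian manifold, and $|\cdot|$ denotes the induced norms on the fibers of $T^*M$. $H:T^*M\times\mathbb R\to\mathbb R$ satisfies: (H1) $H$ is continuous. (H2) For every $R>0$ there is $K>0$ with $H(x,p,u)>R$ whenever $|u|\le R$ and $|p|\ge K$. (H3) $p\mapsto H(x,p,u)$ is convex on $T^*_xM$ for each $(x,u)$. (H4) There is $\Lambda>0$ with $|H(x,p,u)-H(x,p,v)|\le\Lambda|u-v|$ for all $(x,p)$ and $u,v\in\mathbb R$. A lower semicontinuous $v:M\to\mathbb R\cup\{+\infty\}$ is a BJ solution of $H(x,Dv,v)=0$ in $M$ if, whenever $\phi\in C^1(M,\mathbb R)$ and $v-\phi$ attains its minimum at $x$, one has $H(x,D\phi(x),v(x))=0$. *)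

theory Defs
  imports "HOL-Analysis.Analysis" "HOL-Library.Extended_Real"
begin

text \<open>A closed Riemannian manifold is modelled (via the Nash embedding theorem) as a
compact, connected, boundaryless smooth embedded submanifold M of a Euclidean space,
carrying the induced metric.  Cotangent vectors are identified with tangent vectors
through the metric.\<close>

fun Ck_on :: "nat \<Rightarrow> 'a::euclidean_space set \<Rightarrow> ('a \<Rightarrow> 'b::real_normed_vector) \<Rightarrow> bool" where
  "Ck_on 0 S f = continuous_on S f"
| "Ck_on (Suc k) S f =
     (\<exists>f'. (\<forall>x\<in>S. (f has_derivative f' x) (at x)) \<and> (\<forall>w. Ck_on k S (\<lambda>x. f' x w)))"

definition smooth_on :: "'a::euclidean_space set \<Rightarrow> ('a \<Rightarrow> 'b::real_normed_vector) \<Rightarrow> bool" where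
  "smooth_on S f \<longleftrightarrow> (\<forall>k. Ck_on k S f)"

definition smooth_submanifold :: "'a::euclidean_space set \<Rightarrow> bool" where
  "smooth_submanifold M \<longleftrightarrow>
     (\<forall>x\<in>M. \<exists>U V (\<phi>::'a\<Rightarrow>'a) (\<psi>::'a\<Rightarrow>'a) L. open U \<and> open V \<and> x \<in> U \<and> subspace L \<and>
        smooth_on U \<phi> \<and> smooth_on V \<psi> \<and> \<phi> ` U = V \<and>
        (\<forall>y\<in>U. \<psi> (\<phi> y) = y) \<and> (\<forall>y\<in>V. \<phi> (\<psi> y) = y) \<and>
        \<phi> ` (M \<inter> U) = L \<inter> V)"

definition closed_riemannian_manifold :: "'a::euclidean_space set \<Rightarrow> bool" where
  "closed_riemannian_manifold M \<longleftrightarrow>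
     M \<noteq> {} \<and> compact M \<and> connected M \<and> smooth_submanifold M"

definition tangent_space :: "'a::euclidean_space set \<Rightarrow> 'a \<Rightarrow> 'a set" where
  "tangent_space M x = {w. \<exists>\<gamma> e. e > 0 \<and> \<gamma> ` {-e<..<e} \<subseteq> M \<and> \<gamma> 0 = x \<and>
        (\<gamma> has_vector_derivative w) (at 0)}"

text \<open>Differential of (the restriction to M of) \<Phi> at x, as an element of the cotangent
space identified with the tangent space.\<close>
definition mdiff :: "'a::euclidean_space set \<Rightarrow> ('a \<Rightarrow> real) \<Rightarrow> 'a \<Rightarrow> 'a" where
  "mdiff M \<Phi> x = (THE p. p \<in> tangent_space M x \<and>
        (\<forall>w\<in>tangent_space M x. frechet_derivative \<Phi> (at x) w = p \<bullet> w))"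

definition lsc_on :: "'a::metric_space set \<Rightarrow> ('a \<Rightarrow> ereal) \<Rightarrow> bool" where
  "lsc_on M v \<longleftrightarrow> (\<forall>x\<in>M. \<forall>t. t < v x \<longrightarrow> (\<exists>e>0. \<forall>y\<in>M. dist y x < e \<longrightarrow> t < v y))"

text \<open>BJ (Barron--Jensen) solution of H(x,Dv,v)=0 in M.  The test functions are C^1
functions \<Phi> on an open neighbourhood of M; D\<phi>(x) is their differential along M.\<close>
definition BJ_solution ::
  "'a::euclidean_space set \<Rightarrow> ('a \<Rightarrow> 'a \<Rightarrow> real \<Rightarrow> real) \<Rightarrow> ('a \<Rightarrow> ereal) \<Rightarrow> bool" where
  "BJ_solution M H v \<longleftrightarrow>
     lsc_on M v \<and> (\<forall>x\<in>M. v x \<noteq> -\<infinity>) \<and>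
     (\<forall>U \<Phi> x. open U \<and> M \<subseteq> U \<and> Ck_on 1 U \<Phi> \<and> x \<in> M \<and> v x \<noteq> \<infinity> \<and>
        (\<forall>y\<in>M. v x - ereal (\<Phi> x) \<le> v y - ereal (\<Phi> y)) \<longrightarrow>
        H x (mdiff M \<Phi> x) (real_of_ereal (v x)) = 0)"

end

theory Submission
  imports Defs
begin

lemma lsc_attains_min:
  fixes f :: "'a::metric_space \<Rightarrow> ereal"
  assumes "lsc_on S f" "compact S" "S \<noteq> {}"
  shows "\<exists>m\<in>S. \<forall>y\<in>S. f m \<le> f y"
proof (rule ccontr)
  assume "\<not> ?thesis"
  then have "\<forall>m\<in>S. \<exists>y\<in>S. f y < f m" by (auto simp: not_le)
  then obtain Y where Y: "\<forall>m\<in>S. Y m \<in> S \<and> f (Y m) < f m" by metis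
  have "\<forall>m\<in>S. \<exists>e>0. \<forall>y\<in>S. dist y m < e \<longrightarrow> f (Y m) < f y"
    using assms(1) Y unfolding lsc_on_def by blast
  then obtain E where E: "\<forall>m\<in>S. E m > 0 \<and> (\<forall>y\<in>S. dist y m < E m \<longrightarrow> f (Y m) < f y)" by metis
  have "S \<subseteq> (\<Union>m\<in>S. ball m (E m))" using E by force
  then obtain K where K: "K \<subseteq> S" "finite K" "S \<subseteq> (\<Union>m\<in>K. ball m (E m))"
    using compactE_image[OF assms(2), of S "\<lambda>m. ball m (E m)"] by blast
  have "K \<noteq> {}" using K(3) assms(3) by auto
  obtain j where j: "j \<in> K" "(f \<circ> Y) j = Min ((f \<circ> Y) ` K)"
  proof -
    have "Min ((f \<circ> Y) ` K) \<in> (f \<circ> Y) ` K" using Min_in K(2) \<open>K \<noteq> {}\<close> by blast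
    then show ?thesis using that by (metis imageE)
  qed
  have "Y j \<in> S" using j K Y by auto
  then obtain i where i: "i \<in> K" "dist i (Y j) < E i" using K(3) by auto
  then have "f (Y i) < f (Y j)" using E K(1) \<open>Y j \<in> S\<close> by (auto simp: dist_commute)
  moreover have "f (Y j) \<le> f (Y i)" using j i K(2) Min_le[of "(f \<circ> Y) ` K"] by auto
  ultimately show False by auto
qed

lemma lsc_minus_cont:
  fixes v :: "'a::metric_space \<Rightarrow> ereal"
  assumes lsc: "lsc_on S v" and g: "continuous_on S g" and nm: "\<forall>y\<in>S. v y \<noteq> -\<infinity>"
  shows "lsc_on S (\<lambda>y. v y - ereal (g y))"
  unfolding lsc_on_def
proof (intro ballI allI impI)
  fix x t assume x: "x\<in>S" and t: "t < v x - ereal (g x)"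
  show "\<exists>e>0. \<forall>y\<in>S. dist y x < e \<longrightarrow> t < v y - ereal (g y)"
  proof (cases t)
    case MInf
    have "\<forall>y\<in>S. t < v y - ereal (g y)"
    proof
      fix y assume "y \<in> S"
      then show "t < v y - ereal (g y)" using nm MInf by (cases "v y") auto
    qed
    then show ?thesis by (intro exI[of _ 1]) auto
  next
    case PInf
    then show ?thesis using t by auto
  next
    case (real \<tau>)
    have "ereal (\<tau> + g x) < v x" using t real by (cases "v x") auto
    then obtain \<sigma> where s1: "\<tau> + g x < \<sigma>" and s2: "ereal \<sigma> < v x"
      using ereal_dense2 by force
    obtain e1 where e1: "e1 > 0" "\<forall>y\<in>S. dist y x < e1 \<longrightarrow> ereal \<sigma> < v y"
      using lsc x s2 unfolding lsc_on_def by blast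
    obtain e2 where e2: "e2 > 0" "\<forall>y\<in>S. dist y x < e2 \<longrightarrow> dist (g y) (g x) < \<sigma> - \<tau> - g x"
      using g x s1 unfolding continuous_on_iff by (metis diff_gt_0_iff_gt diff_diff_eq)
    have "\<forall>y\<in>S. dist y x < min e1 e2 \<longrightarrow> t < v y - ereal (g y)"
    proof (intro ballI impI)
      fix y assume y: "y \<in> S" "dist y x < min e1 e2"
      have a: "ereal \<sigma> < v y" using e1 y by auto
      have b: "g y < \<sigma> - \<tau>" using e2 y by (auto simp: dist_real_def abs_less_iff)
      show "t < v y - ereal (g y)" using a b real by (cases "v y") auto
    qed
    then show ?thesis using e1 e2 by (intro exI[of _ "min e1 e2"]) auto
  qed
qed

lemma inv_deriv:
  fixes \<phi> \<psi> :: "'a::euclidean_space \<Rightarrow> 'a"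
  assumes U: "open U" "m \<in> U" and inv: "\<forall>y\<in>U. \<psi> (\<phi> y) = y"
    and d1: "(\<phi> has_derivative \<phi>') (at m)" and d2: "(\<psi> has_derivative \<psi>') (at (\<phi> m))"
  shows "\<psi>' (\<phi>' h) = h"
proof -
  have "((\<psi> \<circ> \<phi>) has_derivative (\<psi>' \<circ> \<phi>')) (at m)" using diff_chain_at[OF d1 d2] .
  then have "(id has_derivative (\<psi>' \<circ> \<phi>')) (at m)"
    by (rule has_derivative_transform_within_open[OF _ U]) (use inv in auto)
  moreover have "(id has_derivative id) (at m)" by (rule has_derivative_id)
  ultimately have "\<psi>' \<circ> \<phi>' = id" using has_derivative_unique by blast
  then show ?thesis by (metis comp_apply id_apply)
qed

lemma chart_tangent:
  fixes \<phi> \<psi> :: "'a::euclidean_space \<Rightarrow> 'a"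
  assumes U: "open U" and V: "open V" and L: "subspace L"
    and inv1: "\<forall>y\<in>U. \<psi> (\<phi> y) = y" and inv2: "\<forall>q\<in>V. \<phi> (\<psi> q) = q"
    and img: "\<phi> ` (M \<inter> U) = L \<inter> V"
    and d1: "\<forall>y\<in>U. (\<phi> has_derivative \<phi>' y) (at y)"
    and d2: "\<forall>q\<in>V. (\<psi> has_derivative \<psi>' q) (at q)"
    and m: "m \<in> M" "m \<in> U"
  shows "tangent_space M m = \<psi>' (\<phi> m) ` L"
proof
  have qm: "\<phi> m \<in> L" "\<phi> m \<in> V" using img m by auto
  have lin1: "linear (\<phi>' m)" using d1 m has_derivative_linear by blast
  have lin2: "linear (\<psi>' (\<phi> m))" using d2 qm has_derivative_linear by blast
  show "tangent_space M m \<subseteq> \<psi>' (\<phi> m) ` L"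
  proof
    fix w assume "w \<in> tangent_space M m"
    then obtain \<gamma> e where ge: "e > 0" "\<gamma> ` {-e<..<e} \<subseteq> M" "\<gamma> 0 = m"
        "(\<gamma> has_vector_derivative w) (at 0)"
      unfolding tangent_space_def by blast
    define u where "u = \<phi>' m w"
    have wu: "\<psi>' (\<phi> m) u = w" unfolding u_def
      by (rule inv_deriv[where U=U and \<psi>=\<psi> and \<phi>=\<phi>]) (use U d1 d2 m qm inv1 in auto)
    obtain y z where yz: "y \<in> span L" "\<And>x. x \<in> span L \<Longrightarrow> orthogonal z x" "u = y + z"
      using orthogonal_subspace_decomp_exists by blast
    have yL: "y \<in> L" using yz(1) L by (metis span_eq_iff)
    have zL: "\<And>x. x \<in> L \<Longrightarrow> z \<bullet> x = 0" using yz(2) L by (metis span_eq_iff orthogonal_def)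
    have dg: "(\<gamma> has_derivative (\<lambda>s. s *\<^sub>R w)) (at 0)"
      using ge(4) by (simp add: has_vector_derivative_def)
    have dphi: "(\<phi> has_derivative \<phi>' m) (at (\<gamma> 0))" using d1 m ge(3) by auto
    have dh: "((\<lambda>t. z \<bullet> (\<phi> \<circ> \<gamma>) t) has_derivative (\<lambda>s. z \<bullet> ((\<phi>' m \<circ> (\<lambda>s. s *\<^sub>R w)) s))) (at 0)"
      by (rule bounded_linear.has_derivative[OF bounded_linear_inner_right diff_chain_at[OF dg dphi]])
    have cont: "continuous (at 0) \<gamma>" using ge(4) has_vector_derivative_continuous by blast
    obtain eU where eU: "eU > 0" "ball m eU \<subseteq> U" using U m(2) openE by blast
    obtain d where d: "d > 0" "\<forall>t. dist t 0 < d \<longrightarrow> dist (\<gamma> t) (\<gamma> 0) < eU"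
      using cont eU(1) unfolding continuous_at_eps_delta by blast
    have h0: "z \<bullet> (\<phi> \<circ> \<gamma>) t = 0" if "t \<in> ball 0 (min d e)" for t
    proof -
      have "t \<in> {-e<..<e}" using that by (auto simp: dist_real_def)
      then have "\<gamma> t \<in> M" using ge(2) by blast
      moreover have "\<gamma> t \<in> ball m eU" using d that ge(3) by (auto simp: dist_commute)
      then have "\<gamma> t \<in> U" using eU(2) by blast
      ultimately have "\<phi> (\<gamma> t) \<in> L" using img by auto
      then show ?thesis using zL by simp
    qed
    have "((\<lambda>t. 0::real) has_derivative (\<lambda>s. z \<bullet> ((\<phi>' m \<circ> (\<lambda>s. s *\<^sub>R w)) s))) (at 0)"
      by (rule has_derivative_transform_within_open[OF dh, of "ball 0 (min d e)"])
        (use d ge h0 in auto)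
    moreover have "((\<lambda>t. 0::real) has_derivative (\<lambda>s. 0)) (at 0)" by simp
    ultimately have "(\<lambda>s. z \<bullet> ((\<phi>' m \<circ> (\<lambda>s. s *\<^sub>R w)) s)) = (\<lambda>s. 0)"
      using has_derivative_unique by blast
    then have "z \<bullet> u = 0" unfolding u_def by (metis comp_apply scaleR_one)
    then have "z \<bullet> z = 0" using yz(3) zL[OF yL] by (simp add: inner_add_right inner_commute)
    then have "u \<in> L" using yz(3) yL by simp
    then show "w \<in> \<psi>' (\<phi> m) ` L" using wu by blast
  qed
  show "\<psi>' (\<phi> m) ` L \<subseteq> tangent_space M m"
  proof
    fix w assume "w \<in> \<psi>' (\<phi> m) ` L"
    then obtain e where e: "e \<in> L" "w = \<psi>' (\<phi> m) e" by blast
    obtain r where r: "r > 0" "ball (\<phi> m) r \<subseteq> V" using V qm openE by blast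
    define \<gamma> where "\<gamma> = (\<lambda>t::real. \<psi> (\<phi> m + t *\<^sub>R e))"
    define \<epsilon> where "\<epsilon> = r / (norm e + 1)"
    have np: "norm e + 1 > 0" by (smt (verit) norm_ge_zero)
    have eps: "\<epsilon> > 0" using r np by (simp add: \<epsilon>_def)
    have "\<gamma> t \<in> M" if "t \<in> {-\<epsilon><..<\<epsilon>}" for t
    proof -
      have "\<bar>t\<bar> * norm e < r"
      proof -
        have "\<bar>t\<bar> * norm e \<le> \<bar>t\<bar> * (norm e + 1)" by (simp add: mult_left_mono)
        also have "\<dots> < \<epsilon> * (norm e + 1)" using that
          by (intro mult_strict_right_mono) (use np in auto)
        also have "\<dots> = r" unfolding \<epsilon>_def using np by simp
        finally show ?thesis .
      qed
      then have "\<phi> m + t *\<^sub>R e \<in> V" using r by (auto simp: dist_norm)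
      moreover have "\<phi> m + t *\<^sub>R e \<in> L" using L qm e by (simp add: subspace_add subspace_scale)
      ultimately obtain y where "y \<in> M \<inter> U" "\<phi> y = \<phi> m + t *\<^sub>R e" using img by (metis IntI imageE)
      then show ?thesis unfolding \<gamma>_def using inv1 by (metis IntD1 IntD2)
    qed
    moreover have "\<gamma> 0 = m" unfolding \<gamma>_def using inv1 m by simp
    moreover have "(\<gamma> has_vector_derivative w) (at 0)"
    proof -
      have a: "((\<lambda>t::real. \<phi> m + t *\<^sub>R e) has_derivative (\<lambda>s. s *\<^sub>R e)) (at 0)"
        by (auto intro!: derivative_eq_intros)
      have b: "(\<psi> has_derivative \<psi>' (\<phi> m)) (at ((\<lambda>t::real. \<phi> m + t *\<^sub>R e) 0))" using d2 qm by simp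
      have "(\<gamma> has_derivative (\<psi>' (\<phi> m) \<circ> (\<lambda>s. s *\<^sub>R e))) (at 0)"
        using diff_chain_at[OF a b] unfolding \<gamma>_def comp_def by simp
      moreover have "(\<psi>' (\<phi> m) \<circ> (\<lambda>s. s *\<^sub>R e)) = (\<lambda>s. s *\<^sub>R w)"
        using lin2 e(2) by (auto simp: linear_scale)
      ultimately show ?thesis by (simp add: has_vector_derivative_def)
    qed
    ultimately show "w \<in> tangent_space M m" unfolding tangent_space_def using eps by blast
  qed
qed

lemma linear_basis_expand:
  fixes f :: "'a::euclidean_space \<Rightarrow> 'b::real_normed_vector"
  assumes "linear f"
  shows "f h = (\<Sum>b\<in>Basis. (h \<bullet> b) *\<^sub>R f b)"
proof -
  have "f h = f (\<Sum>b\<in>Basis. (h \<bullet> b) *\<^sub>R b)" by (simp add: euclidean_representation)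
  also have "\<dots> = (\<Sum>b\<in>Basis. (h \<bullet> b) *\<^sub>R f b)"
    using assms by (simp add: linear_sum linear_scale)
  finally show ?thesis .
qed

lemma linear_basis_bound:
  fixes f :: "'a::euclidean_space \<Rightarrow> 'b::real_normed_vector"
  assumes "linear f" "\<And>b. b \<in> Basis \<Longrightarrow> norm (f b) \<le> P b"
  shows "norm (f h) \<le> norm h * (\<Sum>b\<in>Basis. P b)"
proof -
  have "norm (f h) = norm (\<Sum>b\<in>Basis. (h \<bullet> b) *\<^sub>R f b)" using linear_basis_expand[OF assms(1)] by metis
  also have "\<dots> \<le> (\<Sum>b\<in>Basis. norm ((h \<bullet> b) *\<^sub>R f b))" by (rule norm_sum)
  also have "\<dots> \<le> (\<Sum>b\<in>Basis. norm h * P b)"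
  proof (rule sum_mono)
    fix b :: 'a assume b: "b \<in> Basis"
    have "norm ((h \<bullet> b) *\<^sub>R f b) = \<bar>h \<bullet> b\<bar> * norm (f b)" by simp
    also have "\<dots> \<le> norm h * P b"
      using Basis_le_norm[OF b, of h] assms(2)[OF b] by (intro mult_mono) auto
    finally show "norm ((h \<bullet> b) *\<^sub>R f b) \<le> norm h * P b" .
  qed
  also have "\<dots> = norm h * (\<Sum>b\<in>Basis. P b)" by (simp add: sum_distrib_left)
  finally show ?thesis .
qed

lemma deriv_bound_compact:
  fixes f' :: "'a::euclidean_space \<Rightarrow> 'a \<Rightarrow> 'b::real_normed_vector"
  assumes S: "compact S" and c: "\<And>w. continuous_on S (\<lambda>x. f' x w)" and l: "\<And>x. x \<in> S \<Longrightarrow> linear (f' x)"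
  shows "\<exists>P\<ge>0. \<forall>x\<in>S. \<forall>h. norm (f' x h) \<le> P * norm h"
proof -
  have "\<forall>b. \<exists>B. \<forall>x\<in>S. norm (f' x b) \<le> B"
  proof
    fix b
    have "compact ((\<lambda>x. f' x b) ` S)" using compact_continuous_image[OF c S] .
    then have "bounded ((\<lambda>x. f' x b) ` S)" by (rule compact_imp_bounded)
    then obtain a where "\<forall>y\<in>(\<lambda>x. f' x b) ` S. norm y \<le> a"
      unfolding Elementary_Metric_Spaces.bounded_iff by blast
    then show "\<exists>B. \<forall>x\<in>S. norm (f' x b) \<le> B" by auto
  qed
  then obtain B where B: "\<forall>b. \<forall>x\<in>S. norm (f' x b) \<le> B b" by metis
  define P where "P = (\<Sum>b\<in>Basis. \<bar>B b\<bar>)"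
  have "\<forall>x\<in>S. \<forall>h. norm (f' x h) \<le> P * norm h"
  proof (intro ballI allI)
    fix x h assume x: "x \<in> S"
    have "norm (f' x h) \<le> norm h * (\<Sum>b\<in>Basis. \<bar>B b\<bar>)"
      by (rule linear_basis_bound[OF l[OF x]]) (use B x in \<open>meson abs_ge_self order_trans\<close>)
    then show "norm (f' x h) \<le> P * norm h" by (simp add: P_def mult.commute)
  qed
  moreover have "P \<ge> 0" unfolding P_def by (simp add: sum_nonneg)
  ultimately show ?thesis by blast
qed

lemma deriv_close:
  fixes f' :: "'a::euclidean_space \<Rightarrow> 'a \<Rightarrow> 'b::real_normed_vector"
  assumes V: "open V" "q0 \<in> V" and c: "\<And>w. continuous_on V (\<lambda>x. f' x w)"
    and l: "\<And>x. x \<in> V \<Longrightarrow> linear (f' x)" and eta: "\<eta> > 0"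
  shows "\<exists>\<rho>>0. cball q0 \<rho> \<subseteq> V \<and> (\<forall>q\<in>cball q0 \<rho>. \<forall>h. norm (f' q h - f' q0 h) \<le> \<eta> * norm h)"
proof -
  define n where "n = real (card (Basis::'a set))"
  have n: "n > 0" unfolding n_def by (simp add: card_gt_0_iff)
  have "\<forall>b\<in>Basis. eventually (\<lambda>q. dist (f' q b) (f' q0 b) < \<eta> / n) (at q0)"
  proof
    fix b :: 'a
    have "isCont (\<lambda>x. f' x b) q0" using c[of b] V continuous_on_eq_continuous_at by blast
    then have "((\<lambda>x. f' x b) \<longlongrightarrow> f' q0 b) (at q0)" by (simp add: isCont_def)
    then show "eventually (\<lambda>q. dist (f' q b) (f' q0 b) < \<eta> / n) (at q0)"
      using eta n by (simp add: tendsto_iff)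
  qed
  then have "eventually (\<lambda>q. \<forall>b\<in>Basis. dist (f' q b) (f' q0 b) < \<eta> / n) (at q0)"
    by (rule eventually_ball_finite[OF finite_Basis])
  then obtain d where d: "d > 0" "\<forall>q. q \<noteq> q0 \<and> dist q q0 < d \<longrightarrow> (\<forall>b\<in>Basis. dist (f' q b) (f' q0 b) < \<eta> / n)"
    unfolding eventually_at by auto
  obtain eV where eV: "eV > 0" "ball q0 eV \<subseteq> V" using V openE by blast
  define \<rho> where "\<rho> = min d eV / 2"
  have rho: "\<rho> > 0" using d eV by (simp add: \<rho>_def)
  have "cball q0 \<rho> \<subseteq> ball q0 eV" unfolding \<rho>_def using d eV by (auto simp: subset_eq)
  then have sub: "cball q0 \<rho> \<subseteq> V" using eV by blast
  have "\<forall>q\<in>cball q0 \<rho>. \<forall>h. norm (f' q h - f' q0 h) \<le> \<eta> * norm h"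
  proof (intro ballI allI)
    fix q h assume q: "q \<in> cball q0 \<rho>"
    have lin: "linear (\<lambda>h. f' q h - f' q0 h)"
      by (intro linear_compose_sub l) (use q sub V in auto)
    have bb: "\<And>b. b \<in> Basis \<Longrightarrow> norm (f' q b - f' q0 b) \<le> \<eta> / n"
    proof -
      fix b :: 'a assume b: "b \<in> Basis"
      show "norm (f' q b - f' q0 b) \<le> \<eta> / n"
      proof (cases "q = q0")
        case True then show ?thesis using eta n by simp
      next
        case False
        have "dist q q0 < d" using q d unfolding \<rho>_def by (simp add: dist_commute)
        then have "dist (f' q b) (f' q0 b) < \<eta> / n" using d(2) False b by blast
        then show ?thesis by (simp add: dist_norm)
      qed
    qed
    have "norm (f' q h - f' q0 h) \<le> norm h * (\<Sum>b\<in>(Basis::'a set). \<eta> / n)"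
      using linear_basis_bound[OF lin, of "\<lambda>_. \<eta> / n" h] bb by simp
    also have "\<dots> = \<eta> * norm h" using n by (simp add: n_def)
    finally show "norm (f' q h - f' q0 h) \<le> \<eta> * norm h" .
  qed
  then show ?thesis using rho sub by blast
qed

lemma smooth_deriv:
  assumes "smooth_on U f"
  shows "\<exists>f'. (\<forall>x\<in>U. (f has_derivative f' x) (at x)) \<and> (\<forall>w. continuous_on U (\<lambda>x. f' x w))"
proof -
  have "Ck_on (Suc 0) U f" using assms unfolding smooth_on_def by blast
  then show ?thesis by simp
qed

lemma get_chart:
  fixes M :: "'a::euclidean_space set"
  assumes M: "smooth_submanifold M" and x0: "x0 \<in> M"
  obtains U V L and \<phi> \<psi> :: "'a \<Rightarrow> 'a" and \<phi>' \<psi>' :: "'a \<Rightarrow> 'a \<Rightarrow> 'a" where "open U" "open V" "x0 \<in> U" "subspace L"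
    "\<forall>y\<in>U. \<psi> (\<phi> y) = y" "\<forall>q\<in>V. \<phi> (\<psi> q) = q" "\<phi> ` (M \<inter> U) = L \<inter> V"
    "\<forall>y\<in>U. (\<phi> has_derivative \<phi>' y) (at y)" "\<forall>w. continuous_on U (\<lambda>x. \<phi>' x w)"
    "\<forall>q\<in>V. (\<psi> has_derivative \<psi>' q) (at q)" "\<forall>w. continuous_on V (\<lambda>x. \<psi>' x w)"
proof -
  have "\<exists>U V (\<phi>::'a\<Rightarrow>'a) (\<psi>::'a\<Rightarrow>'a) L. open U \<and> open V \<and> x0 \<in> U \<and> subspace L \<and>
        smooth_on U \<phi> \<and> smooth_on V \<psi> \<and> \<phi> ` U = V \<and>
        (\<forall>y\<in>U. \<psi> (\<phi> y) = y) \<and> (\<forall>y\<in>V. \<phi> (\<psi> y) = y) \<and>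
        \<phi> ` (M \<inter> U) = L \<inter> V"
    using M x0 unfolding smooth_submanifold_def by (rule bspec)
  then obtain U V L and \<phi> \<psi> :: "'a \<Rightarrow> 'a" where ch: "open U" "open V" "x0 \<in> U" "subspace L" "smooth_on U \<phi>" "smooth_on V \<psi>"
     "\<phi> ` U = V" "\<forall>y\<in>U. \<psi> (\<phi> y) = y" "\<forall>q\<in>V. \<phi> (\<psi> q) = q" "\<phi> ` (M \<inter> U) = L \<inter> V"
    by (elim exE conjE) blast
  obtain \<phi>' where p: "\<forall>x\<in>U. (\<phi> has_derivative \<phi>' x) (at x)" "\<forall>w. continuous_on U (\<lambda>x. \<phi>' x w)"
    using smooth_deriv[OF ch(5)] by blast
  obtain \<psi>' where q: "\<forall>x\<in>V. (\<psi> has_derivative \<psi>' x) (at x)" "\<forall>w. continuous_on V (\<lambda>x. \<psi>' x w)"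
    using smooth_deriv[OF ch(6)] by blast
  show ?thesis by (rule that[OF ch(1-4) ch(8-10) p q])
qed

lemma tangent_subspace:
  fixes M :: "'a::euclidean_space set"
  assumes M: "smooth_submanifold M" and m: "m \<in> M"
  shows "subspace (tangent_space M m)"
proof -
  obtain U V L and \<phi> \<psi> :: "'a \<Rightarrow> 'a" and \<phi>' \<psi>' :: "'a \<Rightarrow> 'a \<Rightarrow> 'a" where ch: "open U" "open V" "m \<in> U" "subspace L"
    "\<forall>y\<in>U. \<psi> (\<phi> y) = y" "\<forall>q\<in>V. \<phi> (\<psi> q) = q" "\<phi> ` (M \<inter> U) = L \<inter> V"
    "\<forall>y\<in>U. (\<phi> has_derivative \<phi>' y) (at y)" "\<forall>w. continuous_on U (\<lambda>x. \<phi>' x w)"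
    "\<forall>q\<in>V. (\<psi> has_derivative \<psi>' q) (at q)" "\<forall>w. continuous_on V (\<lambda>x. \<psi>' x w)"
    by (rule get_chart[OF M m])
  have T: "tangent_space M m = \<psi>' (\<phi> m) ` L"
    by (rule chart_tangent[OF ch(1,2,4,5,6,7,8,10) m ch(3)])
  have "\<phi> m \<in> V" using ch(7) m ch(3) by auto
  then have "linear (\<psi>' (\<phi> m))" using ch(10) has_derivative_linear by blast
  then show ?thesis unfolding T using ch(4) linear_subspace_image by blast
qed

lemma mdiff_char:
  assumes T: "subspace (tangent_space M m)" and d: "(\<Phi> has_derivative (\<lambda>h. g \<bullet> h)) (at m)"
  shows "mdiff M \<Phi> m \<in> tangent_space M m \<and> (\<forall>w\<in>tangent_space M m. g \<bullet> w = mdiff M \<Phi> m \<bullet> w)"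
proof -
  define T where "T = tangent_space M m"
  have fd: "frechet_derivative \<Phi> (at m) = (\<lambda>h. g \<bullet> h)" using frechet_derivative_at[OF d] by simp
  obtain y z where yz: "y \<in> span T" "\<And>x. x \<in> span T \<Longrightarrow> orthogonal z x" "g = y + z"
    using orthogonal_subspace_decomp_exists by blast
  have yT: "y \<in> T" using yz(1) T T_def by (metis span_eq_iff)
  have zT: "\<And>x. x \<in> T \<Longrightarrow> z \<bullet> x = 0" using yz(2) T T_def by (metis span_eq_iff orthogonal_def)
  have ex: "\<exists>!p. p \<in> T \<and> (\<forall>w\<in>T. frechet_derivative \<Phi> (at m) w = p \<bullet> w)"
  proof (rule ex1I[of _ y])
    show "y \<in> T \<and> (\<forall>w\<in>T. frechet_derivative \<Phi> (at m) w = y \<bullet> w)"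
      using yT zT yz(3) fd by (simp add: inner_add_left)
  next
    fix p assume p: "p \<in> T \<and> (\<forall>w\<in>T. frechet_derivative \<Phi> (at m) w = p \<bullet> w)"
    have "p - y \<in> T" using p yT T T_def by (simp add: subspace_diff)
    then have "p \<bullet> (p - y) = y \<bullet> (p - y)" using p yT zT yz(3) fd by (simp add: inner_add_left)
    then have "(p - y) \<bullet> (p - y) = 0" by (simp add: inner_diff_left)
    then show "p = y" by simp
  qed
  have "mdiff M \<Phi> m \<in> T \<and> (\<forall>w\<in>T. frechet_derivative \<Phi> (at m) w = mdiff M \<Phi> m \<bullet> w)"
    unfolding mdiff_def T_def[symmetric] by (rule theI'[OF ex])
  then show ?thesis using fd T_def by simp
qed

lemma final_ineq:
  fixes d w :: "'a::real_inner"
  assumes "norm (d - w) \<le> norm w / 4"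
  shows "(1/2) * norm d * norm w \<le> d \<bullet> w" and "d \<noteq> 0 \<Longrightarrow> w \<noteq> 0"
proof -
  have cs: "\<bar>(d - w) \<bullet> w\<bar> \<le> norm (d - w) * norm w" by (rule Cauchy_Schwarz_ineq2)
  have "d \<bullet> w = w \<bullet> w + (d - w) \<bullet> w" by (simp add: inner_diff_left)
  also have "w \<bullet> w = norm w ^ 2" by (simp add: power2_norm_eq_inner)
  finally have dw: "d \<bullet> w = norm w ^ 2 + (d - w) \<bullet> w" .
  have nd: "norm d \<le> norm w + norm (d - w)" using norm_triangle_ineq[of w "d - w"] by simp
  have nw: "norm w \<ge> 0" by simp
  have "(1/2) * norm d * norm w \<le> (1/2) * (norm w + norm w / 4) * norm w"
    using nd assms nw by (intro mult_right_mono mult_left_mono) auto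
  also have "\<dots> \<le> norm w ^ 2 - norm w / 4 * norm w" by (simp add: power2_eq_square algebra_simps)
  also have "\<dots> \<le> norm w ^ 2 + (d - w) \<bullet> w"
    using cs assms nw mult_right_mono[OF assms nw] by linarith
  finally show "(1/2) * norm d * norm w \<le> d \<bullet> w" using dw by simp
  show "d \<noteq> 0 \<Longrightarrow> w \<noteq> 0" using assms by auto
qed

lemma local_geom:
  fixes M :: "'a::euclidean_space set"
  assumes M: "smooth_submanifold M" and x0: "x0 \<in> M"
  shows "\<exists>r>0. \<forall>m\<in>M. \<forall>y\<in>M. m \<in> ball x0 r \<longrightarrow> y \<in> ball x0 r \<longrightarrow> y \<noteq> m \<longrightarrow>
           (\<exists>w\<in>tangent_space M m. w \<noteq> 0 \<and> (1/2) * norm (y - m) * norm w \<le> (y - m) \<bullet> w)"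
proof -
  obtain U V L and \<phi> \<psi> :: "'a \<Rightarrow> 'a" and \<phi>' \<psi>' :: "'a \<Rightarrow> 'a \<Rightarrow> 'a" where ch: "open U" "open V" "x0 \<in> U" "subspace L"
    "\<forall>y\<in>U. \<psi> (\<phi> y) = y" "\<forall>q\<in>V. \<phi> (\<psi> q) = q" "\<phi> ` (M \<inter> U) = L \<inter> V"
    "\<forall>y\<in>U. (\<phi> has_derivative \<phi>' y) (at y)" "\<forall>w. continuous_on U (\<lambda>x. \<phi>' x w)"
    "\<forall>q\<in>V. (\<psi> has_derivative \<psi>' q) (at q)" "\<forall>w. continuous_on V (\<lambda>x. \<psi>' x w)"
    by (rule get_chart[OF M x0])
  have linp: "\<And>y. y \<in> U \<Longrightarrow> linear (\<phi>' y)" using ch(8) has_derivative_linear by blast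
  have linq: "\<And>q. q \<in> V \<Longrightarrow> linear (\<psi>' q)" using ch(10) has_derivative_linear by blast
  obtain e0 where e0: "e0 > 0" "ball x0 e0 \<subseteq> U" using ch(1,3) openE by blast
  define r0 where "r0 = e0 / 2"
  have r0: "r0 > 0" "cball x0 r0 \<subseteq> U" using e0 unfolding r0_def by (auto simp: subset_eq)
  obtain P where P: "P \<ge> 0" "\<forall>y\<in>cball x0 r0. \<forall>h. norm (\<phi>' y h) \<le> P * norm h"
    using deriv_bound_compact[of "cball x0 r0" \<phi>'] compact_cball r0(2) ch(9) linp
      continuous_on_subset by (metis subsetD)
  define \<eta> where "\<eta> = 1 / (8 * (P + 1))"
  have eta: "\<eta> > 0" using P by (simp add: \<eta>_def)
  have etaP: "2 * \<eta> * P \<le> 1 / 4" using P by (simp add: \<eta>_def field_simps)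
  define q0 where "q0 = \<phi> x0"
  have q0: "q0 \<in> V" using ch(7) x0 ch(3) unfolding q0_def by auto
  obtain \<rho> where rho: "\<rho> > 0" "cball q0 \<rho> \<subseteq> V"
      "\<forall>q\<in>cball q0 \<rho>. \<forall>h. norm (\<psi>' q h - \<psi>' q0 h) \<le> \<eta> * norm h"
    using deriv_close[OF ch(2) q0, of \<psi>' \<eta>] ch(11) linq eta by blast
  have "continuous (at x0) \<phi>" using ch(8) ch(3) has_derivative_continuous by blast
  then obtain d where d: "d > 0" "\<forall>y. dist y x0 < d \<longrightarrow> dist (\<phi> y) (\<phi> x0) < \<rho>"
    using rho(1) unfolding continuous_at_eps_delta by blast
  define r where "r = min r0 d"
  have r: "r > 0" using r0 d by (simp add: r_def)
  have main: "\<exists>w\<in>tangent_space M m. w \<noteq> 0 \<and> (1/2) * norm (y - m) * norm w \<le> (y - m) \<bullet> w"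
    if m: "m \<in> M" "m \<in> ball x0 r" and y: "y \<in> M" "y \<in> ball x0 r" and ym: "y \<noteq> m" for m y
  proof -
    have mc: "m \<in> cball x0 r0" and yc: "y \<in> cball x0 r0" using m y by (auto simp: r_def dist_commute)
    have mU: "m \<in> U" and yU: "y \<in> U" using mc yc r0 by auto
    define qm where "qm = \<phi> m"
    define qy where "qy = \<phi> y"
    have qmL: "qm \<in> L" "qm \<in> V" using ch(7) m mU unfolding qm_def by auto
    have qyL: "qy \<in> L" "qy \<in> V" using ch(7) y yU unfolding qy_def by auto
    have qmc: "qm \<in> cball q0 \<rho>" using d m unfolding qm_def q0_def r_def
      by (auto simp: dist_commute less_imp_le)
    have qyc: "qy \<in> cball q0 \<rho>" using d y unfolding qy_def q0_def r_def
      by (auto simp: dist_commute less_imp_le)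
    define e where "e = qy - qm"
    have eL: "e \<in> L" using qmL qyL ch(4) unfolding e_def by (simp add: subspace_diff)
    define w where "w = \<psi>' qm e"
    have T: "tangent_space M m = \<psi>' (\<phi> m) ` L"
      by (rule chart_tangent[OF ch(1,2,4,5,6,7,8,10) m(1) mU])
    have wT: "w \<in> tangent_space M m" unfolding T w_def qm_def using eL by blast
    have ym': "y - m = \<psi> qy - \<psi> qm" using ch(5) mU yU unfolding qm_def qy_def by simp
    have lin_est: "norm (\<psi> qy - \<psi> qm - \<psi>' qm (qy - qm)) \<le> norm (qy - qm) * (2 * \<eta>)"
    proof (rule differentiable_bound_linearization[where S="cball q0 \<rho>" and f'=\<psi>'])
      show "\<And>t. t \<in> {0..1} \<Longrightarrow> qm + t *\<^sub>R (qy - qm) \<in> cball q0 \<rho>"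
      proof -
        fix t :: real assume t: "t \<in> {0..1}"
        have "(1 - t) *\<^sub>R qm + t *\<^sub>R qy \<in> cball q0 \<rho>"
          using convex_cball[of q0 \<rho>] qmc qyc t unfolding convex_alt by auto
        moreover have "(1 - t) *\<^sub>R qm + t *\<^sub>R qy = qm + t *\<^sub>R (qy - qm)"
          by (simp add: algebra_simps)
        ultimately show "qm + t *\<^sub>R (qy - qm) \<in> cball q0 \<rho>" by simp
      qed
      show "\<And>x. x \<in> cball q0 \<rho> \<Longrightarrow> (\<psi> has_derivative \<psi>' x) (at x within cball q0 \<rho>)"
        using ch(10) rho(2) has_derivative_at_withinI by blast
      show "\<And>x. x \<in> cball q0 \<rho> \<Longrightarrow> onorm (\<psi>' x - \<psi>' qm) \<le> 2 * \<eta>"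
      proof -
        fix x assume x: "x \<in> cball q0 \<rho>"
        show "onorm (\<psi>' x - \<psi>' qm) \<le> 2 * \<eta>"
        proof (rule onorm_le)
          fix h
          have "norm ((\<psi>' x - \<psi>' qm) h) = norm ((\<psi>' x h - \<psi>' q0 h) - (\<psi>' qm h - \<psi>' q0 h))"
            by simp
          also have "\<dots> \<le> norm (\<psi>' x h - \<psi>' q0 h) + norm (\<psi>' qm h - \<psi>' q0 h)"
            by (rule norm_triangle_ineq4)
          also have "\<dots> \<le> \<eta> * norm h + \<eta> * norm h"
            using rho(3) x qmc by (intro add_mono) auto
          finally show "norm ((\<psi>' x - \<psi>' qm) h) \<le> 2 * \<eta> * norm h" by simp
        qed
      qed
    qed (rule qmc)
    have inv: "\<phi>' m (\<psi>' qm e) = e"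
    proof (rule inv_deriv[where U=V and \<phi>=\<psi> and \<psi>=\<phi> and m=qm and \<phi>'="\<psi>' qm" and \<psi>'="\<phi>' m" and h=e])
      show "open V" by (rule ch(2))
      show "qm \<in> V" by (rule qmL(2))
      show "\<forall>y\<in>V. \<phi> (\<psi> y) = y" by (rule ch(6))
      show "(\<psi> has_derivative \<psi>' qm) (at qm)" using ch(10) qmL by blast
      have "\<psi> qm = m" using ch(5) mU unfolding qm_def by simp
      then show "(\<phi> has_derivative \<phi>' m) (at (\<psi> qm))" using ch(8) mU by simp
    qed
    have ne: "norm e \<le> P * norm w" using P(2) mc inv unfolding w_def by metis
    have "norm (y - m - w) \<le> norm e * (2 * \<eta>)" using lin_est ym' unfolding w_def e_def by simp
    also have "\<dots> \<le> P * norm w * (2 * \<eta>)" using ne eta by (intro mult_right_mono) auto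
    also have "\<dots> = (2 * \<eta> * P) * norm w" by simp
    also have "\<dots> \<le> (1/4) * norm w" using etaP by (intro mult_right_mono) auto
    finally have close: "norm ((y - m) - w) \<le> norm w / 4" by simp
    have "w \<noteq> 0" using final_ineq(2)[OF close] ym by simp
    then show ?thesis using final_ineq(1)[OF close] wT by blast
  qed
  show ?thesis using r main by blast
qed

lemma global_geom:
  fixes M :: "'a::euclidean_space set"
  assumes M: "smooth_submanifold M" and cM: "compact M"
  shows "\<exists>r>0. \<forall>m\<in>M. \<forall>y\<in>M. norm (y - m) < r \<longrightarrow> y \<noteq> m \<longrightarrow>
           (\<exists>w\<in>tangent_space M m. w \<noteq> 0 \<and> (1/2) * norm (y - m) * norm w \<le> (y - m) \<bullet> w)"
proof -
  have "\<forall>x0\<in>M. \<exists>r>0. \<forall>m\<in>M. \<forall>y\<in>M. m \<in> ball x0 r \<longrightarrow> y \<in> ball x0 r \<longrightarrow> y \<noteq> m \<longrightarrow>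
           (\<exists>w\<in>tangent_space M m. w \<noteq> 0 \<and> (1/2) * norm (y - m) * norm w \<le> (y - m) \<bullet> w)"
    using local_geom[OF M] by blast
  then obtain R where R: "\<forall>x0\<in>M. R x0 > 0 \<and> (\<forall>m\<in>M. \<forall>y\<in>M. m \<in> ball x0 (R x0) \<longrightarrow> y \<in> ball x0 (R x0) \<longrightarrow> y \<noteq> m \<longrightarrow>
           (\<exists>w\<in>tangent_space M m. w \<noteq> 0 \<and> (1/2) * norm (y - m) * norm w \<le> (y - m) \<bullet> w))"
    by metis
  have cov: "M \<subseteq> \<Union>((\<lambda>x. ball x (R x)) ` M)" using R by force
  obtain \<epsilon> where eps: "\<epsilon> > 0" "\<And>x. x \<in> M \<Longrightarrow> \<exists>G\<in>(\<lambda>x. ball x (R x)) ` M. ball x \<epsilon> \<subseteq> G"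
    using Heine_Borel_lemma[OF cM cov] by blast
  have "\<forall>m\<in>M. \<forall>y\<in>M. norm (y - m) < \<epsilon> \<longrightarrow> y \<noteq> m \<longrightarrow>
           (\<exists>w\<in>tangent_space M m. w \<noteq> 0 \<and> (1/2) * norm (y - m) * norm w \<le> (y - m) \<bullet> w)"
  proof (intro ballI impI)
    fix m y assume m: "m \<in> M" and y: "y \<in> M" and my: "norm (y - m) < \<epsilon>" and ne: "y \<noteq> m"
    obtain x0 where x0: "x0 \<in> M" "ball m \<epsilon> \<subseteq> ball x0 (R x0)" using eps(2)[OF m] by blast
    have "m \<in> ball m \<epsilon>" using eps(1) by simp
    then have "m \<in> ball x0 (R x0)" using x0(2) by blast
    moreover have "y \<in> ball x0 (R x0)" using x0(2) my by (auto simp: dist_norm norm_minus_commute)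
    ultimately show "\<exists>w\<in>tangent_space M m. w \<noteq> 0 \<and> (1/2) * norm (y - m) * norm w \<le> (y - m) \<bullet> w"
      using R x0(1) m y ne by blast
  qed
  then show ?thesis using eps(1) by blast
qed

lemma test_fun_deriv:
  fixes y2 :: "'a::euclidean_space"
  assumes eps: "\<epsilon> > 0"
  defines "S \<equiv> \<lambda>y. sqrt ((y - y2) \<bullet> (y - y2) + \<epsilon>\<^sup>2)"
  shows "S y > 0"
    and "((\<lambda>y. - C * S y) has_derivative (\<lambda>h. ((C / S y) *\<^sub>R (y2 - y)) \<bullet> h)) (at y)"
proof -
  have pos: "(y - y2) \<bullet> (y - y2) + \<epsilon>\<^sup>2 > 0" using eps by (simp add: add_nonneg_pos)
  then show Sp: "S y > 0" unfolding S_def by simp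
  have "((\<lambda>y. - C * S y) has_derivative
      (\<lambda>h. - C * (inverse (sqrt ((y - y2) \<bullet> (y - y2) + \<epsilon>\<^sup>2)) / 2 * (h \<bullet> (y - y2) + (y - y2) \<bullet> h)))) (at y)"
    unfolding S_def using pos by (auto intro!: derivative_eq_intros)
  moreover have "(\<lambda>h. - C * (inverse (sqrt ((y - y2) \<bullet> (y - y2) + \<epsilon>\<^sup>2)) / 2 * (h \<bullet> (y - y2) + (y - y2) \<bullet> h)))
      = (\<lambda>h. ((C / S y) *\<^sub>R (y2 - y)) \<bullet> h)"
  proof
    fix h
    define a where "a = (y - y2) \<bullet> h"
    have e1: "h \<bullet> (y - y2) + (y - y2) \<bullet> h = 2 * a" unfolding a_def by (simp add: inner_commute)
    have e2: "((C / S y) *\<^sub>R (y2 - y)) \<bullet> h = (C / S y) * (- a)"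
      unfolding a_def by (simp only: inner_scaleR_left) (simp add: inner_diff_left)
    have e3: "sqrt ((y - y2) \<bullet> (y - y2) + \<epsilon>\<^sup>2) = S y" unfolding S_def by simp
    show "- C * (inverse (sqrt ((y - y2) \<bullet> (y - y2) + \<epsilon>\<^sup>2)) / 2 * (h \<bullet> (y - y2) + (y - y2) \<bullet> h))
      = ((C / S y) *\<^sub>R (y2 - y)) \<bullet> h" unfolding e1 e2 e3 by algebra
  qed
  ultimately show "((\<lambda>y. - C * S y) has_derivative (\<lambda>h. ((C / S y) *\<^sub>R (y2 - y)) \<bullet> h)) (at y)" by metis
qed

lemma test_fun_C1:
  fixes y2 :: "'a::euclidean_space"
  assumes eps: "\<epsilon> > 0"
  shows "Ck_on 1 UNIV (\<lambda>y. - C * sqrt ((y - y2) \<bullet> (y - y2) + \<epsilon>\<^sup>2))"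
proof -
  define S where "S = (\<lambda>y. sqrt ((y - y2) \<bullet> (y - y2) + \<epsilon>\<^sup>2))"
  have d: "\<forall>x\<in>UNIV. ((\<lambda>y. - C * S y) has_derivative (\<lambda>h. ((C / S x) *\<^sub>R (y2 - x)) \<bullet> h)) (at x)"
    using test_fun_deriv[OF eps] unfolding S_def by blast
  have Sp: "\<And>x. S x \<noteq> 0" using test_fun_deriv(1)[OF eps] unfolding S_def by (metis less_irrefl)
  have c: "\<forall>w. continuous_on UNIV (\<lambda>x. ((C / S x) *\<^sub>R (y2 - x)) \<bullet> w)"
    using Sp unfolding S_def by (auto intro!: continuous_intros)
  have "Ck_on (Suc 0) UNIV (\<lambda>y. - C * S y)"
    unfolding Ck_on.simps by (rule exI[of _ "\<lambda>x h. ((C / S x) *\<^sub>R (y2 - x)) \<bullet> h"]) (use d c in simp)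
  then show ?thesis unfolding S_def by simp
qed

lemma H_grad_bound:
  fixes M :: "'a::euclidean_space set" and H :: "'a \<Rightarrow> 'a \<Rightarrow> real \<Rightarrow> real"
  assumes M: "smooth_submanifold M" "compact M"
    and H1: "continuous_on {(x, p, u). x \<in> M \<and> p \<in> tangent_space M x} (\<lambda>(x, p, u). H x p u)"
    and H2: "\<forall>R>0. \<exists>K>0. \<forall>x\<in>M. \<forall>p\<in>tangent_space M x. \<forall>u.
               \<bar>u\<bar> \<le> R \<and> norm p \<ge> K \<longrightarrow> H x p u > R"
    and H3: "\<forall>x\<in>M. \<forall>u. convex_on (tangent_space M x) (\<lambda>p. H x p u)"
    and H4: "\<exists>\<Lambda>>0. \<forall>x\<in>M. \<forall>p\<in>tangent_space M x. \<forall>u w.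
               \<bar>H x p u - H x p w\<bar> \<le> \<Lambda> * \<bar>u - w\<bar>"
  shows "\<exists>A B. A \<ge> 0 \<and> B \<ge> 0 \<and> (\<forall>x\<in>M. \<forall>p\<in>tangent_space M x. \<forall>u. H x p u = 0 \<longrightarrow> norm p \<le> A + B * \<bar>u\<bar>)"
proof -
  have Tsub: "\<And>x. x \<in> M \<Longrightarrow> subspace (tangent_space M x)" using tangent_subspace[OF M(1)] by blast
  have zT: "\<And>x. x \<in> M \<Longrightarrow> 0 \<in> tangent_space M x" using Tsub subspace_0 by blast
  have "continuous_on M (\<lambda>x. (\<lambda>(x, p, u). H x p u) ((\<lambda>x. (x, 0::'a, 0::real)) x))"
    by (rule continuous_on_compose2[OF H1]) (auto intro!: continuous_intros simp: zT)
  then have cH: "continuous_on M (\<lambda>x. H x 0 0)" by simp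
  have "bounded ((\<lambda>x. H x 0 0) ` M)" by (rule compact_imp_bounded[OF compact_continuous_image[OF cH M(2)]])
  then obtain Hm where Hm: "\<forall>x\<in>M. norm (H x 0 0) \<le> Hm"
    unfolding Elementary_Metric_Spaces.bounded_iff by auto
  define R where "R = \<bar>Hm\<bar> + 1"
  have R: "R > 0" unfolding R_def by simp
  obtain K where K: "K > 0" "\<forall>x\<in>M. \<forall>p\<in>tangent_space M x. \<forall>u. \<bar>u\<bar> \<le> R \<and> norm p \<ge> K \<longrightarrow> H x p u > R"
    using H2 R by blast
  obtain \<Lambda> where L: "\<Lambda> > 0" "\<forall>x\<in>M. \<forall>p\<in>tangent_space M x. \<forall>u w. \<bar>H x p u - H x p w\<bar> \<le> \<Lambda> * \<bar>u - w\<bar>"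
    using H4 by blast
  have grow: "H x p 0 > norm p / K" if x: "x \<in> M" and p: "p \<in> tangent_space M x" and pK: "norm p \<ge> K" for x p
  proof -
    have np: "norm p > 0" using pK K by linarith
    define l where "l = K / norm p"
    have l: "0 < l" "l \<le> 1" using K np pK unfolding l_def by (auto simp: field_simps)
    define q where "q = l *\<^sub>R p"
    have qT: "q \<in> tangent_space M x" unfolding q_def using Tsub[OF x] p by (simp add: subspace_scale)
    have nq: "norm q = K" unfolding q_def l_def using np K by simp
    have "\<bar>0::real\<bar> \<le> R \<and> norm q \<ge> K" using R nq by simp
    then have HqR: "H x q 0 > R" using K(2) x qT by blast
    have cv: "H x ((1 - l) *\<^sub>R 0 + l *\<^sub>R p) 0 \<le> (1 - l) * H x 0 0 + l * H x p 0"
    proof -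
      have c0: "convex_on (tangent_space M x) (\<lambda>p. H x p 0)" using H3 x by blast
      then have "\<forall>a\<in>tangent_space M x. \<forall>b\<in>tangent_space M x. \<forall>u\<ge>0. \<forall>v\<ge>0. u + v = 1 \<longrightarrow>
          H x (u *\<^sub>R a + v *\<^sub>R b) 0 \<le> u * H x a 0 + v * H x b 0" unfolding convex_on_def by blast
      then show ?thesis using zT[OF x] p l by (meson add_diff_cancel_left' diff_add_cancel diff_ge_0_iff_ge less_imp_le)
    qed
    then have "R < (1 - l) * H x 0 0 + l * H x p 0" using HqR unfolding q_def by simp
    moreover have "(1 - l) * H x 0 0 \<le> \<bar>Hm\<bar>"
    proof -
      have "H x 0 0 \<le> \<bar>Hm\<bar>" using Hm x by (auto simp: abs_le_iff)
      then have "(1 - l) * H x 0 0 \<le> (1 - l) * \<bar>Hm\<bar>" using l by (intro mult_left_mono) auto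
      also have "\<dots> \<le> \<bar>Hm\<bar>" using l by (simp add: mult_left_le_one_le)
      finally show ?thesis .
    qed
    ultimately have "l * H x p 0 > 1" unfolding R_def by linarith
    then have "H x p 0 > 1 / l" using l by (simp add: field_simps)
    then show ?thesis unfolding l_def by simp
  qed
  have "\<forall>x\<in>M. \<forall>p\<in>tangent_space M x. \<forall>u. H x p u = 0 \<longrightarrow> norm p \<le> K + (K * \<Lambda>) * \<bar>u\<bar>"
  proof (intro ballI allI impI)
    fix x p u assume x: "x \<in> M" and p: "p \<in> tangent_space M x" and H0: "H x p u = 0"
    show "norm p \<le> K + (K * \<Lambda>) * \<bar>u\<bar>"
    proof (rule ccontr)
      assume "\<not> ?thesis"
      then have big: "norm p > K + (K * \<Lambda>) * \<bar>u\<bar>" by simp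
      have "0 \<le> (K * \<Lambda>) * \<bar>u\<bar>" using K L by simp
      then have pK: "norm p \<ge> K" using big by linarith
      have g: "H x p 0 > norm p / K" by (rule grow[OF x p pK])
      have "norm p / K > 1 + \<Lambda> * \<bar>u\<bar>"
        using big K by (simp add: field_simps)
      moreover have "\<bar>H x p u - H x p 0\<bar> \<le> \<Lambda> * \<bar>u - 0\<bar>" using L x p by blast
      ultimately show False using g H0 by (simp add: abs_le_iff)
    qed
  qed
  then show ?thesis using K L by (intro exI[of _ K] exI[of _ "K * \<Lambda>"]) auto
qed

lemma sqrt_facts:
  fixes n e :: real
  assumes n: "n \<ge> 0" and e: "e > 0"
  shows "sqrt (n\<^sup>2 + e\<^sup>2) \<ge> n" "sqrt (n\<^sup>2 + e\<^sup>2) \<ge> e" "sqrt (n\<^sup>2 + e\<^sup>2) \<le> n + e"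
    and "n \<ge> e \<Longrightarrow> sqrt (n\<^sup>2 + e\<^sup>2) \<le> 2 * n"
proof -
  show "sqrt (n\<^sup>2 + e\<^sup>2) \<ge> n" using n by (simp add: real_le_rsqrt)
  show "sqrt (n\<^sup>2 + e\<^sup>2) \<ge> e" using e by (simp add: real_le_rsqrt)
  show "sqrt (n\<^sup>2 + e\<^sup>2) \<le> n + e" using n e
    by (intro real_le_lsqrt) (auto simp: power2_eq_square algebra_simps)
  show "n \<ge> e \<Longrightarrow> sqrt (n\<^sup>2 + e\<^sup>2) \<le> 2 * n"
  proof -
    assume ne: "n \<ge> e"
    have "e\<^sup>2 \<le> n\<^sup>2" using ne e by (simp add: power_mono)
    moreover have "(2 * n)\<^sup>2 = 4 * n\<^sup>2" by (simp add: power_mult_distrib)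
    moreover have "n\<^sup>2 \<ge> 0" by simp
    ultimately have "n\<^sup>2 + e\<^sup>2 \<le> (2 * n)\<^sup>2" by linarith
    then show "sqrt (n\<^sup>2 + e\<^sup>2) \<le> 2 * n" using n
      by (intro real_le_lsqrt) auto
  qed
qed

lemma lin_aux: "(np::real) \<le> A + Z \<Longrightarrow> 8 * (A + X) < C \<Longrightarrow> Z \<le> X + Y \<Longrightarrow> Y \<le> C / 16 \<Longrightarrow> 0 < C \<Longrightarrow> np < C / 4"
  by argo

lemma lin2: "2 * (z::real) < r / 2 \<Longrightarrow> 2 * (x + y) < r \<Longrightarrow> x + y + 2 * z < r / 2 + r / 2"
  by (simp add: algebra_simps)

lemma core_step:
  fixes M :: "'a::euclidean_space set" and v :: "'a \<Rightarrow> ereal" and H :: "'a \<Rightarrow> 'a \<Rightarrow> real \<Rightarrow> real"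
  assumes BJ: "BJ_solution M H v" and cM: "compact M"
    and lsc: "lsc_on M v" and ran: "\<forall>x\<in>M. v x \<noteq> -\<infinity>"
    and Tsub: "\<forall>m\<in>M. subspace (tangent_space M m)"
    and HB: "\<forall>x\<in>M. \<forall>p\<in>tangent_space M x. \<forall>u. H x p u = 0 \<longrightarrow> norm p \<le> A + B * \<bar>u\<bar>"
    and A0: "A \<ge> 0" and B0: "B \<ge> 0"
    and geom: "\<forall>m\<in>M. \<forall>y\<in>M. norm (y - m) < r \<longrightarrow> y \<noteq> m \<longrightarrow>
           (\<exists>w\<in>tangent_space M m. w \<noteq> 0 \<and> (1/2) * norm (y - m) * norm w \<le> (y - m) \<bullet> w)"
    and mu: "\<forall>y\<in>M. ereal \<mu> \<le> v y"
    and y1: "y1 \<in> M" "v y1 = ereal b" and y2: "y2 \<in> M"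
    and eps: "0 < \<epsilon>" "\<epsilon> \<le> \<delta>" and d12: "norm (y1 - y2) \<le> \<delta>"
    and dB: "16 * B * \<delta> \<le> 1" and dr: "4 * \<delta> < r"
    and C1: "C > 8 * (A + B * (\<bar>\<mu>\<bar> + \<bar>b\<bar>))" and C2: "C * r > 2 * (\<bar>b\<bar> + \<bar>\<mu>\<bar>)"
  shows "\<exists>m\<in>M. norm (m - y2) < \<epsilon> \<and> v m \<le> ereal (b + C * norm (y1 - y2))"
proof -
  define S where "S = (\<lambda>y. sqrt ((y - y2) \<bullet> (y - y2) + \<epsilon>\<^sup>2))"
  define \<Phi> where "\<Phi> = (\<lambda>y. - C * S y)"
  have Seq: "S y = sqrt ((norm (y - y2))\<^sup>2 + \<epsilon>\<^sup>2)" for y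
    unfolding S_def by (simp add: power2_norm_eq_inner)
  have Sge: "S y \<ge> norm (y - y2)" "S y \<ge> \<epsilon>" "S y \<le> norm (y - y2) + \<epsilon>" for y
    unfolding Seq using sqrt_facts[OF norm_ge_zero eps(1)] by auto
  have Sle2: "norm (y - y2) \<ge> \<epsilon> \<Longrightarrow> S y \<le> 2 * norm (y - y2)" for y
    unfolding Seq using sqrt_facts(4)[OF norm_ge_zero eps(1)] by auto
  have Spos: "S y > 0" for y using Sge(2)[of y] eps by linarith
  have Cpos: "C > 0"
  proof -
    have "0 \<le> 8 * (A + B * (\<bar>\<mu>\<bar> + \<bar>b\<bar>))" using A0 B0 by simp
    then show ?thesis using C1 by linarith
  qed
  have cont: "continuous_on M (\<lambda>y. \<Phi> y)"
    unfolding \<Phi>_def S_def by (auto intro!: continuous_intros)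
  have lscf: "lsc_on M (\<lambda>y. v y - ereal (\<Phi> y))" by (rule lsc_minus_cont[OF lsc cont ran])
  obtain m where m: "m \<in> M" "\<forall>y\<in>M. v m - ereal (\<Phi> m) \<le> v y - ereal (\<Phi> y)"
    using lsc_attains_min[OF lscf cM] y1 by blast
  have "v m - ereal (\<Phi> m) \<le> v y1 - ereal (\<Phi> y1)" using m(2) y1(1) by blast
  then have fm: "v m - ereal (\<Phi> m) \<le> ereal (b + C * S y1)"
    using y1(2) unfolding \<Phi>_def by simp
  have "v m \<noteq> \<infinity>" using fm by auto
  moreover have "v m \<noteq> -\<infinity>" using ran m by auto
  ultimately obtain a where vm: "v m = ereal a" by (cases "v m") auto
  have ineq: "a + C * S m \<le> b + C * S y1" using fm vm unfolding \<Phi>_def by simp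
  have amu: "\<mu> \<le> a" using mu m vm by auto
  have Sy1: "C * S y1 \<le> C * norm (y1 - y2) + C * \<epsilon>"
    using mult_left_mono[OF Sge(3)[of y1], of C] Cpos by (simp add: algebra_simps)
  have Sm: "C * \<epsilon> \<le> C * S m" using mult_left_mono[OF Sge(2)[of m], of C] Cpos by simp
  have abound: "a \<le> b + C * norm (y1 - y2)" using ineq Sy1 Sm by linarith
  have close: "norm (m - y2) < \<epsilon>"
  proof (rule ccontr)
    assume "\<not> ?thesis"
    then have ge: "norm (m - y2) \<ge> \<epsilon>" by simp
    have mne: "m \<noteq> y2" using ge eps by auto
    have Cd: "C * norm (y1 - y2) \<le> C * \<delta>" using d12 Cpos by (simp add: mult_left_mono)
    have Ce: "C * \<epsilon> \<le> C * \<delta>" using eps Cpos by (simp add: mult_left_mono)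
    have aabs: "\<bar>a\<bar> \<le> \<bar>\<mu>\<bar> + \<bar>b\<bar> + C * \<delta>" 
    proof -
      have Cd0: "0 \<le> C * \<delta>" using Cpos eps by simp
      show ?thesis using abound amu Cd Cd0 abs_ge_self[of \<mu>] abs_ge_minus_self[of \<mu>]
        abs_ge_self[of b] abs_ge_minus_self[of b] unfolding abs_le_iff by linarith
    qed
    have "C * norm (m - y2) \<le> C * S m" using mult_left_mono[OF Sge(1)[of m], of C] Cpos by simp
    also have "\<dots> \<le> b - a + C * S y1" using ineq by linarith
    also have "\<dots> \<le> \<bar>b\<bar> + \<bar>\<mu>\<bar> + 2 * (C * \<delta>)" using Sy1 Cd Ce amu by linarith
    also have "\<dots> < C * r / 2 + C * r / 2"
    proof -
      have "2 * (C * \<delta>) < C * r / 2" using dr Cpos by (simp add: algebra_simps)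
      then show ?thesis using lin2 C2 by (simp add: add.commute)
    qed
    finally have "C * norm (m - y2) < C * r" by simp
    then have mr: "norm (y2 - m) < r" using Cpos by (simp add: norm_minus_commute)
    obtain w where w: "w \<in> tangent_space M m" "w \<noteq> 0"
        "(1/2) * norm (y2 - m) * norm w \<le> (y2 - m) \<bullet> w"
      using geom m(1) y2 mr mne by blast
    have C1': "Ck_on 1 UNIV \<Phi>" unfolding \<Phi>_def S_def by (rule test_fun_C1[OF eps(1)])
    have bj: "\<forall>U \<Phi> x. open U \<and> M \<subseteq> U \<and> Ck_on 1 U \<Phi> \<and> x \<in> M \<and> v x \<noteq> \<infinity> \<and>
        (\<forall>y\<in>M. v x - ereal (\<Phi> x) \<le> v y - ereal (\<Phi> y)) \<longrightarrow>
        H x (mdiff M \<Phi> x) (real_of_ereal (v x)) = 0"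
      using BJ unfolding BJ_solution_def by (elim conjE)
    have "H m (mdiff M \<Phi> m) (real_of_ereal (v m)) = 0"
    proof (rule bj[rule_format], intro conjI)
      show "open (UNIV::'a set)" by simp
      show "M \<subseteq> UNIV" by simp
      show "Ck_on 1 UNIV \<Phi>" by (rule C1')
      show "m \<in> M" by (rule m(1))
      show "v m \<noteq> \<infinity>" using vm by simp
      show "\<forall>y\<in>M. v m - ereal (\<Phi> m) \<le> v y - ereal (\<Phi> y)" by (rule m(2))
    qed
    then have H0: "H m (mdiff M \<Phi> m) a = 0" using vm by simp
    define g where "g = (C / S m) *\<^sub>R (y2 - m)"
    have dPhi: "(\<Phi> has_derivative (\<lambda>h. g \<bullet> h)) (at m)"
      unfolding \<Phi>_def g_def S_def by (rule test_fun_deriv(2)[OF eps(1)])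
    have md: "mdiff M \<Phi> m \<in> tangent_space M m \<and> (\<forall>w\<in>tangent_space M m. g \<bullet> w = mdiff M \<Phi> m \<bullet> w)"
      by (rule mdiff_char[OF _ dPhi]) (use Tsub m in blast)
    define p where "p = mdiff M \<Phi> m"
    have pT: "p \<in> tangent_space M m" and gw: "g \<bullet> w = p \<bullet> w" using md w(1) unfolding p_def by auto
    have np: "norm p \<le> A + B * \<bar>a\<bar>" using HB m(1) pT H0 unfolding p_def by blast
    have s1: "B * \<bar>a\<bar> \<le> B * (\<bar>\<mu>\<bar> + \<bar>b\<bar>) + B * (C * \<delta>)"
      using mult_left_mono[OF aabs B0] by (simp add: algebra_simps)
    have s2: "B * (C * \<delta>) \<le> C / 16"
    proof -
      have "B * (C * \<delta>) = C * (B * \<delta>)" by simp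
      also have "\<dots> \<le> C * (1/16)" using dB Cpos by (intro mult_left_mono) auto
      finally show ?thesis by simp
    qed
    have np2: "norm p < C / 4" by (rule lin_aux[OF np C1 s1 s2 Cpos])
    have nw: "norm w > 0" using w(2) by simp
    have "p \<bullet> w \<le> norm p * norm w" by (rule norm_cauchy_schwarz)
    also have "\<dots> < C / 4 * norm w" using np2 nw by (simp add: mult_strict_right_mono)
    finally have up: "p \<bullet> w < C / 4 * norm w" .
    have Sm2: "S m \<le> 2 * norm (y2 - m)" using Sle2[OF ge] by (simp add: norm_minus_commute)
    have "g \<bullet> w = (C / S m) * ((y2 - m) \<bullet> w)" unfolding g_def by simp
    also have "\<dots> \<ge> (C / S m) * ((1/2) * norm (y2 - m) * norm w)"
      using w(3) Cpos Spos[of m] by (intro mult_left_mono) auto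
    finally have "g \<bullet> w \<ge> (C / S m) * ((1/2) * norm (y2 - m) * norm w)" .
    moreover have "(C / S m) * ((1/2) * norm (y2 - m) * norm w) \<ge> C / 4 * norm w"
    proof -
      have "C * S m \<le> C * (2 * norm (y2 - m))" using Sm2 Cpos by (simp add: mult_left_mono)
      then have "C / 2 \<le> C * norm (y2 - m) / S m" using Spos[of m] by (simp add: field_simps)
      then have "C / 2 * (norm w / 2) \<le> C * norm (y2 - m) / S m * (norm w / 2)"
        using nw by (intro mult_right_mono) auto
      then show ?thesis by (simp add: field_simps)
    qed
    ultimately show False using gw up by linarith
  qed
  have "v m \<le> ereal (b + C * norm (y1 - y2))" using vm abound by simp
  then show ?thesis using close m(1) by blast
qed

theorem corollary6p2:
  fixes M :: "'a::euclidean_space set"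
    and H :: "'a \<Rightarrow> 'a \<Rightarrow> real \<Rightarrow> real"
    and v :: "'a \<Rightarrow> ereal"
    and z :: 'a
  assumes M: "closed_riemannian_manifold M"
    and H1: "continuous_on {(x, p, u). x \<in> M \<and> p \<in> tangent_space M x} (\<lambda>(x, p, u). H x p u)"
    and H2: "\<forall>R>0. \<exists>K>0. \<forall>x\<in>M. \<forall>p\<in>tangent_space M x. \<forall>u.
               \<bar>u\<bar> \<le> R \<and> norm p \<ge> K \<longrightarrow> H x p u > R"
    and H3: "\<forall>x\<in>M. \<forall>u. convex_on (tangent_space M x) (\<lambda>p. H x p u)"
    and H4: "\<exists>\<Lambda>>0. \<forall>x\<in>M. \<forall>p\<in>tangent_space M x. \<forall>u w.
               \<bar>H x p u - H x p w\<bar> \<le> \<Lambda> * \<bar>u - w\<bar>"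
    and lsc: "lsc_on M v"
    and ran: "\<forall>x\<in>M. v x \<noteq> -\<infinity>"
    and BJ: "BJ_solution M H v"
    and z: "z \<in> M" "v z \<noteq> \<infinity>"
  shows "(\<forall>x\<in>M. v x \<noteq> \<infinity>) \<and> (\<exists>C. C\<ge>0 \<and> C-lipschitz_on M (\<lambda>x. real_of_ereal (v x)))"
proof -
  have Mne: "M \<noteq> {}" and cM: "compact M" and conM: "connected M" and sM: "smooth_submanifold M"
    using M unfolding closed_riemannian_manifold_def by auto
  have Tsub: "\<forall>m\<in>M. subspace (tangent_space M m)" using tangent_subspace[OF sM] by blast
  obtain A B where AB: "A \<ge> 0" "B \<ge> 0"
      "\<forall>x\<in>M. \<forall>p\<in>tangent_space M x. \<forall>u. H x p u = 0 \<longrightarrow> norm p \<le> A + B * \<bar>u\<bar>"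
    using H_grad_bound[OF sM cM H1 H2 H3 H4] by blast
  obtain r where r: "r > 0" "\<forall>m\<in>M. \<forall>y\<in>M. norm (y - m) < r \<longrightarrow> y \<noteq> m \<longrightarrow>
           (\<exists>w\<in>tangent_space M m. w \<noteq> 0 \<and> (1/2) * norm (y - m) * norm w \<le> (y - m) \<bullet> w)"
    using global_geom[OF sM cM] by blast
  obtain m0 where m0: "m0 \<in> M" "\<forall>y\<in>M. v m0 \<le> v y" using lsc_attains_min[OF lsc cM Mne] by blast
  have "v m0 \<le> v z" using m0 z by blast
  then have "v m0 \<noteq> \<infinity>" using z(2) by auto
  moreover have "v m0 \<noteq> -\<infinity>" using ran m0 by blast
  ultimately obtain \<mu> where mu0: "v m0 = ereal \<mu>" by (cases "v m0") auto
  have mu: "\<forall>y\<in>M. ereal \<mu> \<le> v y" using m0 mu0 by metis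
  define \<delta> where "\<delta> = min (1 / (16 * B + 1)) (r / 8)"
  have d0: "\<delta> > 0" unfolding \<delta>_def using r AB by (simp add: add_nonneg_pos)
  have dB: "16 * B * \<delta> \<le> 1"
  proof -
    have "\<delta> \<le> 1 / (16 * B + 1)" unfolding \<delta>_def by simp
    then have "16 * B * \<delta> \<le> 16 * B * (1 / (16 * B + 1))" using AB by (intro mult_left_mono) auto
    also have "\<dots> \<le> 1" using AB by (simp add: field_simps)
    finally show ?thesis .
  qed
  have dr: "4 * \<delta> < r" unfolding \<delta>_def using r by linarith
  define Cf where "Cf = (\<lambda>b::real. 8 * (A + B * (\<bar>\<mu>\<bar> + \<bar>b\<bar>)) + 2 * (\<bar>b\<bar> + \<bar>\<mu>\<bar>) / r + 1)"
  have Cf1: "Cf b > 8 * (A + B * (\<bar>\<mu>\<bar> + \<bar>b\<bar>))" for b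
  proof -
    have "2 * (\<bar>b\<bar> + \<bar>\<mu>\<bar>) / r \<ge> 0" using r by simp
    then show ?thesis unfolding Cf_def by linarith
  qed
  have Cf2: "Cf b * r > 2 * (\<bar>b\<bar> + \<bar>\<mu>\<bar>)" for b
  proof -
    have "0 \<le> 8 * (A + B * (\<bar>\<mu>\<bar> + \<bar>b\<bar>))" using AB by simp
    then have "Cf b \<ge> 2 * (\<bar>b\<bar> + \<bar>\<mu>\<bar>) / r + 1" unfolding Cf_def by linarith
    then have "Cf b * r \<ge> (2 * (\<bar>b\<bar> + \<bar>\<mu>\<bar>) / r + 1) * r" using r by (intro mult_right_mono) auto
    also have "(2 * (\<bar>b\<bar> + \<bar>\<mu>\<bar>) / r + 1) * r = 2 * (\<bar>b\<bar> + \<bar>\<mu>\<bar>) + r" using r by (simp add: field_simps)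
    finally show ?thesis using r by linarith
  qed
  have Cfpos: "Cf b \<ge> 0" for b
  proof -
    have "0 \<le> 8 * (A + B * (\<bar>\<mu>\<bar> + \<bar>b\<bar>))" using AB by simp
    then show ?thesis using Cf1[of b] by linarith
  qed
  have Cfmono: "Cf b \<le> Cf b'" if "\<bar>b\<bar> \<le> \<bar>b'\<bar>" for b b'
  proof -
    have "B * (\<bar>\<mu>\<bar> + \<bar>b\<bar>) \<le> B * (\<bar>\<mu>\<bar> + \<bar>b'\<bar>)" using that AB by (intro mult_left_mono) auto
    moreover have "2 * (\<bar>b\<bar> + \<bar>\<mu>\<bar>) / r \<le> 2 * (\<bar>b'\<bar> + \<bar>\<mu>\<bar>) / r" using that r by (intro divide_right_mono) auto
    ultimately show ?thesis unfolding Cf_def by argo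
  qed
  have LL: "v y2 \<le> ereal (b + Cf b * norm (y1 - y2))"
    if y1: "y1 \<in> M" "v y1 = ereal b" and y2: "y2 \<in> M" and d12: "norm (y1 - y2) \<le> \<delta>" for y1 y2 b
  proof (rule ccontr)
    assume "\<not> ?thesis"
    then have lt: "ereal (b + Cf b * norm (y1 - y2)) < v y2" by simp
    obtain e where e: "e > 0" "\<forall>y\<in>M. dist y y2 < e \<longrightarrow> ereal (b + Cf b * norm (y1 - y2)) < v y"
      using lsc y2 lt unfolding lsc_on_def by blast
    define \<epsilon> where "\<epsilon> = min e \<delta>"
    have eps: "0 < \<epsilon>" "\<epsilon> \<le> \<delta>" using e d0 unfolding \<epsilon>_def by auto
    obtain m where m: "m \<in> M" "norm (m - y2) < \<epsilon>" "v m \<le> ereal (b + Cf b * norm (y1 - y2))"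
      using core_step[OF BJ cM lsc ran Tsub AB(3) AB(1) AB(2) r(2) mu y1 y2 eps d12 dB dr Cf1 Cf2] by blast
    have "dist m y2 < e" using m(2) unfolding \<epsilon>_def by (simp add: dist_norm)
    then have "ereal (b + Cf b * norm (y1 - y2)) < v m" using e m(1) by blast
    then show False using m(3) by simp
  qed
  have fin_near: "v y \<noteq> \<infinity>" if hh: "x \<in> M" "y \<in> M" "norm (x - y) \<le> \<delta>" "v x \<noteq> \<infinity>" for x y
  proof -
    obtain b where "v x = ereal b" using hh(4) ran hh(1) by (cases "v x") auto
    then have "v y \<le> ereal (b + Cf b * norm (x - y))" using LL hh by blast
    then show ?thesis by auto
  qed
  define Uo where "Uo = (\<Union>x\<in>{x\<in>M. v x \<noteq> \<infinity>}. ball x \<delta>)"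
  define Vo where "Vo = (\<Union>x\<in>{x\<in>M. v x = \<infinity>}. ball x \<delta>)"
  have oU: "open Uo" and oV: "open Vo" unfolding Uo_def Vo_def by auto
  have disj: "Uo \<inter> Vo \<inter> M = {}"
  proof (rule ccontr)
    assume "Uo \<inter> Vo \<inter> M \<noteq> {}"
    then obtain y x1 x2 where y: "y \<in> M" and x1: "x1 \<in> M" "v x1 \<noteq> \<infinity>" "dist x1 y < \<delta>"
      and x2: "x2 \<in> M" "v x2 = \<infinity>" "dist x2 y < \<delta>"
      unfolding Uo_def Vo_def by auto
    have "v y \<noteq> \<infinity>" using fin_near[OF x1(1) y] x1 by (simp add: dist_norm)
    then have "v x2 \<noteq> \<infinity>" using fin_near[OF y x2(1)] x2(3) by (simp add: dist_norm norm_minus_commute)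
    then show False using x2(2) by simp
  qed
  have cov: "M \<subseteq> Uo \<union> Vo"
  proof
    fix y assume y: "y \<in> M"
    have "y \<in> ball y \<delta>" using d0 by simp
    then show "y \<in> Uo \<union> Vo" using y unfolding Uo_def Vo_def by (cases "v y = \<infinity>") auto
  qed
  have "z \<in> Uo \<inter> M" using z d0 unfolding Uo_def by force
  then have "Vo \<inter> M = {}" using connectedD[OF conM oU oV disj cov] by blast
  then have fin: "\<forall>x\<in>M. v x \<noteq> \<infinity>"
  proof (intro ballI)
    fix x assume "Vo \<inter> M = {}" "x \<in> M"
    show "v x \<noteq> \<infinity>"
    proof
      assume "v x = \<infinity>"
      then have "x \<in> Vo" using \<open>x \<in> M\<close> d0 unfolding Vo_def by force
      then show False using \<open>Vo \<inter> M = {}\<close> \<open>x \<in> M\<close> by blast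
    qed
  qed
  define f where "f = (\<lambda>x. real_of_ereal (v x))"
  have vf: "v x = ereal (f x)" if "x \<in> M" for x
    using fin ran that unfolding f_def by (cases "v x") auto
  have LLr: "f y \<le> f x + Cf (f x) * norm (x - y)" if "x \<in> M" "y \<in> M" "norm (x - y) \<le> \<delta>" for x y
    using LL[OF that(1) vf[OF that(1)] that(2,3)] vf[OF that(2)] by simp
  have fmu: "\<mu> \<le> f x" if "x \<in> M" for x using mu vf[OF that] that by fastforce
  have "M \<subseteq> (\<Union>x\<in>M. ball x \<delta>)" using d0 by force
  then obtain K where K: "K \<subseteq> M" "finite K" "M \<subseteq> (\<Union>x\<in>K. ball x \<delta>)"
    using compactE_image[OF cM, of M "\<lambda>x. ball x \<delta>"] by blast
  define Bd where "Bd = (\<Sum>k\<in>K. \<bar>f k\<bar> + Cf (f k) * \<delta>) + \<bar>\<mu>\<bar>"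
  have Bd: "\<bar>f y\<bar> \<le> Bd" if y: "y \<in> M" for y
  proof -
    obtain k where k: "k \<in> K" "dist k y < \<delta>" using K(3) y by auto
    have kM: "k \<in> M" using k(1) K(1) by blast
    have "norm (k - y) \<le> \<delta>" using k(2) by (simp add: dist_norm)
    then have "f y \<le> f k + Cf (f k) * norm (k - y)" using LLr[OF kM y] by blast
    also have "\<dots> \<le> \<bar>f k\<bar> + Cf (f k) * \<delta>"
      using k Cfpos[of "f k"] by (intro add_mono mult_left_mono) (auto simp: dist_norm)
    also have "\<dots> \<le> (\<Sum>k\<in>K. \<bar>f k\<bar> + Cf (f k) * \<delta>)"
      using K(2) k(1) Cfpos d0 by (intro member_le_sum) (auto intro!: add_nonneg_nonneg mult_nonneg_nonneg)
    finally have up: "f y \<le> (\<Sum>k\<in>K. \<bar>f k\<bar> + Cf (f k) * \<delta>)" .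
    have "0 \<le> (\<Sum>k\<in>K. \<bar>f k\<bar> + Cf (f k) * \<delta>)"
      using Cfpos d0 by (intro sum_nonneg) (auto intro!: add_nonneg_nonneg mult_nonneg_nonneg)
    then show ?thesis using up fmu[OF y] unfolding Bd_def by linarith
  qed
  define L where "L = Cf Bd + 2 * Bd / \<delta>"
  have Bd0: "Bd \<ge> 0" using Bd[OF z(1)] by linarith
  have L0: "L \<ge> 0" unfolding L_def using Cfpos[of Bd] Bd0 d0 by simp
  have lip: "dist (f x) (f y) \<le> L * dist x y" if x: "x \<in> M" and y: "y \<in> M" for x y
  proof (cases "norm (x - y) \<le> \<delta>")
    case True
    have c1: "Cf (f x) \<le> Cf Bd" using Bd[OF x] Bd0 by (intro Cfmono) simp
    have c2: "Cf (f y) \<le> Cf Bd" using Bd[OF y] Bd0 by (intro Cfmono) simp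
    have n0: "norm (x - y) \<ge> 0" by simp
    have "f y - f x \<le> Cf (f x) * norm (x - y)" using LLr[OF x y True] by simp
    also have "\<dots> \<le> Cf Bd * norm (x - y)" using c1 n0 by (rule mult_right_mono)
    finally have a1: "f y - f x \<le> Cf Bd * norm (x - y)" .
    have "f x - f y \<le> Cf (f y) * norm (y - x)" using LLr[OF y x] True by (simp add: norm_minus_commute)
    also have "\<dots> \<le> Cf Bd * norm (x - y)" using c2 n0 by (simp add: norm_minus_commute mult_right_mono)
    finally have a2: "f x - f y \<le> Cf Bd * norm (x - y)" .
    have "Cf Bd * norm (x - y) \<le> L * norm (x - y)"
      unfolding L_def using Bd0 d0 n0 by (intro mult_right_mono) auto
    then show ?thesis using a1 a2 by (simp add: dist_real_def dist_norm abs_le_iff)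
  next
    case False
    have "dist (f x) (f y) \<le> 2 * Bd" using Bd[OF x] Bd[OF y] by (simp add: dist_real_def abs_le_iff) 
    also have "2 * Bd = (2 * Bd / \<delta>) * \<delta>" using d0 by simp
    also have "\<dots> \<le> (2 * Bd / \<delta>) * norm (x - y)" using False Bd0 d0 by (intro mult_left_mono) auto
    also have "\<dots> \<le> L * norm (x - y)" unfolding L_def using Cfpos[of Bd] by (intro mult_right_mono) auto
    finally show ?thesis by (simp add: dist_norm)
  qed
  have "L-lipschitz_on M f" unfolding lipschitz_on_def using L0 lip by blast
  then show ?thesis using fin L0 unfolding f_def by blast
qed

end
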